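(* Consider the system $x[k+1]=Ax[k]+\sigma[k]Bu[k]+(1-\sigma[k])d[k]+w[k]$, $y[k]=x[k]+v[k]$ and the controller $x_K[k+1]=A_Kx_K[k]+B_Ky[k]$, $u[k]=C_Kx_K[k]+D_Ky[k]$, for which $A_{CL}$ is a Schur matrix and for which $\Omega_I$ satisfies I1)-I3) and $\Omega_O$ satisfies O1)-O4). If the system's initialization satisfies $x[k_0]\in\mathcal{S}_c$, then applying the control procedure (Algorithm 1) described in the context ensures that: a) $x[k]\in\mathcal{X}$ and $u[k]\in\mathcal{U}$, for all $k\geq k_0$; b) There exists $T_{\mathrm{max}}\in\mathbb{N}_{>0}$ which satisfies: $\sigma[k_0]=1\Rightarrow\exists\, T_0\in\mathbb{N}_{[1,T_{\mathrm{max}}]}$ s.t. $\sigma[k_0+T_0]=0$; and $k>k_0,\,\sigma[k]=1,\,\sigma[k-1]=0\Rightarrow\exists\, T\in\mathbb{N}_{[1,T_{\mathrm{max}}]}$ s.t. $\sigma[k+T]=0$; c) $\sigma[k]=0\Rightarrow x[k]\in\mathcal{S}$, for all $k\geq k_0$.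
   Context: Plant: $x[k+1]=Ax[k]+\sigma[k]Bu[k]+(1-\sigma[k])d[k]+w[k]$, $y[k]=x[k]+v[k]$, with $x[k]\in\mathbb{R}^n$, $u[k]\in\mathbb{R}^m$, $d[k]\in\mathcal{D}$, $w[k]\in\mathcal{W}$, $v[k]\in\mathcal{V}$, and switching signal $\sigma[k]\in\{0,1\}$. Given sets $\mathcal{U}\subset\mathbb{R}^m$ and $\mathcal{S}\subset\mathcal{X}\subset\mathbb{R}^n$; all sets $\mathcal{D},\mathcal{W},\mathcal{V},\mathcal{U},\mathcal{S},\mathcal{X}$ are polytopes containing the zero vector in their interiors, and: there exist $\varepsilon_p,\varepsilon_m\in(0,1)$ with $\mathcal{V}\subseteq\varepsilon_p\mathcal{S}$ and $(-\mathcal{V})\subseteq\varepsilon_m\mathcal{S}$, where $(-\mathcal{V}):=\{-v:v\in\mathcal{V}\}$; there exists $\delta>0$ with $\{r\in\mathbb{R}^n:\|r\|\leq\delta\}\subseteq\mathcal{S}$; and $\mathcal{S}^+:=A\mathcal{S}\oplus\mathcal{W}\oplus\mathcal{D}\subseteq\mathcal{X}$ ($\oplus$ = Minkowski sum, $\ominus$ = Pontryagin difference). Define $\mathcal{S}_c:=\mathrm{conv}(\mathcal{S},\mathcal{S}^+)$. Controller with $n_K$-dimensional state $x_K$: $x_K[k+1]=A_Kx_K[k]+B_Ky[k]$, $u[k]=C_Kx_K[k]+D_Ky[k]$. With $\xi=[x^\top\ x_K^\top]^\top$, $z=[w^\top\ v^\top]^\top\in\mathcal{Z}:=\mathcal{W}\times\mathcal{V}$,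 the closed loop is $\xi[k+1]=A_{CL}\xi[k]+B_{CL}z[k]$, $u[k]=C_{CL}\xi[k]+D_{CL}z[k]$ with $A_{CL}=\begin{bmatrix}A+BD_K & BC_K\\ B_K & A_K\end{bmatrix}$, $B_{CL}=\begin{bmatrix}I_n & BD_K\\ O & B_K\end{bmatrix}$, $C_{CL}=[D_K\ C_K]$, $D_{CL}=[O\ D_K]$. Let $\mathcal{N}:=(-\mathcal{V})\oplus\mathcal{V}$. The sets $\Omega_I\subset\mathbb{R}^n$, $\Omega_O\subset\mathbb{R}^{n+n_K}$ are polyhedral, contain the origin, and satisfy: I1) $\Omega_I\subseteq\varepsilon_s\mathcal{S}$ for a given $\varepsilon_s\in(0,1)$; I2) there exists $\alpha>0$ with $\{r\in\mathbb{R}^n:\|r\|\leq\alpha\}\subseteq\Omega_I\ominus\mathcal{N}$; I3) there exists $\beta\in(0,1)$ with $\bigoplus_{i=0}^N[I_n\ O]A_{CL}^iB_{CL}\mathcal{Z}\subseteq\beta(\Omega_I\ominus\mathcal{N})$ for all $N\in\mathbb{N}$; O1) $\mathcal{S}_c\times\{0_{n_K}\}\subseteq\Omega_O$; O2) $A_{CL}\Omega_O\oplus B_{CL}\mathcal{Z}\subseteq\Omega_O$; O3) $[I_n\ O]\Omega_O\subseteq\mathcal{X}$; O4) $C_{CL}\Omega_O\oplus D_{CL}\mathcal{Z}\subseteq\mathcal{U}$. Algorithm 1: Initialization: read $y[k_0]$; if $y[k_0]\in\mathcal{S}\ominus(-\mathcal{V})$, set $\sigma[k_0]=0$, $u[k_0]=0_m$,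 $k\gets k_0+1$ and go to Monitoring; otherwise set $k\gets k_0$, $\sigma[k]=1$, $x_K[k]=0_{n_K}$ and go to Control. Monitoring: read $y[k]$; if $y[k]\in\mathcal{S}\ominus(-\mathcal{V})$: if $\sigma[k-1]=1$ and $y[k]\notin\Omega_I\ominus(-\mathcal{V})$, set $\sigma[k]=1$ and go to Control; else set $\sigma[k]=0$, $u[k]=0_m$, $k\gets k+1$ and go to Monitoring. If $y[k]\notin\mathcal{S}\ominus(-\mathcal{V})$: if $\sigma[k-1]=0$ set $x_K[k]=0_{n_K}$; then set $\sigma[k]=1$ and go to Control. Control: compute $x_K[k+1]$ and $u[k]$ via the controller equations, $k\gets k+1$, go to Monitoring. *)

theory Defs
  imports "HOL-Analysis.Analysis"
begin

definition msum :: "'a::ab_group_add set \<Rightarrow> 'a set \<Rightarrow> 'a set" (infixl "\<oplus>\<^sub>M" 65) where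
  "A \<oplus>\<^sub>M B = {a + b | a b. a \<in> A \<and> b \<in> B}"

definition pdiff :: "'a::ab_group_add set \<Rightarrow> 'a set \<Rightarrow> 'a set" (infixl "\<ominus>\<^sub>P" 65) where
  "A \<ominus>\<^sub>P B = {x. \<forall>b\<in>B. x + b \<in> A}"

definition sneg :: "'a::ab_group_add set \<Rightarrow> 'a set" where
  "sneg A = uminus ` A"

definition sscale :: "real \<Rightarrow> 'a::real_vector set \<Rightarrow> 'a set" where
  "sscale c A = (\<lambda>x. c *\<^sub>R x) ` A"

definition big_msum :: "nat \<Rightarrow> (nat \<Rightarrow> 'a::ab_group_add set) \<Rightarrow> 'a set" where
  "big_msum N F = {(\<Sum>i\<in>{0..N}. g i) | g. \<forall>i\<in>{0..N}. g i \<in> F i}"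

primrec matpow :: "real^'a^'a \<Rightarrow> nat \<Rightarrow> real^'a^'a" where
  "matpow M 0 = mat 1"
| "matpow M (Suc k) = M ** matpow M k"

definition schur :: "real^'a^'a \<Rightarrow> bool" where
  "schur M \<longleftrightarrow> (\<forall>(lam::complex) (v::complex^'a).
      v \<noteq> 0 \<and> (\<chi> i j. complex_of_real (M $ i $ j)) *v v = lam *s v \<longrightarrow> cmod lam < 1)"

definition block :: "real^'c1^'r1 \<Rightarrow> real^'c2^'r1 \<Rightarrow> real^'c1^'r2 \<Rightarrow> real^'c2^'r2
    \<Rightarrow> real^('c1 + 'c2)^('r1 + 'r2)" where
  "block P Q R S = (\<chi> i j. case i of
      Inl a \<Rightarrow> (case j of Inl b \<Rightarrow> P $ a $ b | Inr b \<Rightarrow> Q $ a $ b)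
    | Inr a \<Rightarrow> (case j of Inl b \<Rightarrow> R $ a $ b | Inr b \<Rightarrow> S $ a $ b))"

definition hblock :: "real^'c1^'r \<Rightarrow> real^'c2^'r \<Rightarrow> real^('c1 + 'c2)^'r" where
  "hblock P Q = (\<chi> i j. case j of Inl b \<Rightarrow> P $ i $ b | Inr b \<Rightarrow> Q $ i $ b)"

definition stack :: "real^'a \<Rightarrow> real^'b \<Rightarrow> real^('a + 'b)" where
  "stack a b = (\<chi> i. case i of Inl j \<Rightarrow> a $ j | Inr j \<Rightarrow> b $ j)"

definition top_part :: "real^('a::finite + 'b::finite) \<Rightarrow> real^'a" where
  "top_part z = (\<chi> i. z $ Inl i)"

definition bot_part :: "real^('a::finite + 'b::finite) \<Rightarrow> real^'b" where
  "bot_part z = (\<chi> i. z $ Inr i)"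

definition A_CL :: "real^'n^'n \<Rightarrow> real^'m^'n \<Rightarrow> real^'k^'k \<Rightarrow> real^'n^'k \<Rightarrow> real^'k^'m
    \<Rightarrow> real^'n^'m \<Rightarrow> real^('n + 'k)^('n + 'k)" where
  "A_CL A B AK BK CK DK = block (A + B ** DK) (B ** CK) BK AK"

definition B_CL :: "real^'m^'n \<Rightarrow> real^'n^'k \<Rightarrow> real^'n^'m \<Rightarrow> real^('n + 'n)^('n + 'k)" where
  "B_CL B BK DK = block (mat 1) (B ** DK) 0 BK"

definition C_CL :: "real^'k^'m \<Rightarrow> real^'n^'m \<Rightarrow> real^('n + 'k)^'m" where
  "C_CL CK DK = hblock DK CK"

definition D_CL :: "real^'n^'m \<Rightarrow> real^('n + 'n)^'m" where
  "D_CL DK = hblock 0 DK"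

definition Zset :: "(real^'n) set \<Rightarrow> (real^'n) set \<Rightarrow> (real^('n + 'n)) set" where
  "Zset W V = {stack w v | w v. w \<in> W \<and> v \<in> V}"

text \<open>The switching signal
  sig takes values in {0,1}; xK is the controller state (only meaningful in control mode);
  d, w, v are the disturbance and noise signals, y the measurement.\<close>
definition alg_run ::
  "real^'n^'n \<Rightarrow> real^'m^'n \<Rightarrow> real^'k^'k \<Rightarrow> real^'n^'k \<Rightarrow> real^'k^'m \<Rightarrow> real^'n^'m
   \<Rightarrow> (real^'n) set \<Rightarrow> (real^'n) set \<Rightarrow> (real^'n) set \<Rightarrow> (real^'n) set \<Rightarrow> (real^'n) set
   \<Rightarrow> nat \<Rightarrow> (nat \<Rightarrow> real^'n) \<Rightarrow> (nat \<Rightarrow> real^'m) \<Rightarrow> (nat \<Rightarrow> real^'k) \<Rightarrow> (nat \<Rightarrow> real)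
   \<Rightarrow> (nat \<Rightarrow> real^'n) \<Rightarrow> (nat \<Rightarrow> real^'n) \<Rightarrow> (nat \<Rightarrow> real^'n) \<Rightarrow> (nat \<Rightarrow> real^'n) \<Rightarrow> bool" where
  "alg_run A B AK BK CK DK D W V S OmI k0 x u xK sig d w v y \<longleftrightarrow>
     \<comment> \<open>plant, disturbances and noise\<close>
     (\<forall>k\<ge>k0. d k \<in> D \<and> w k \<in> W \<and> v k \<in> V \<and> y k = x k + v k \<and>
        x (Suc k) = A *v x k + sig k *\<^sub>R (B *v u k) + (1 - sig k) *\<^sub>R d k + w k) \<and>
     \<comment> \<open>initialization\<close>
     (if y k0 \<in> S \<ominus>\<^sub>P sneg V then sig k0 = 0 \<and> u k0 = 0
      else sig k0 = 1 \<and> xK k0 = 0) \<and>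
     \<comment> \<open>monitoring\<close>
     (\<forall>k>k0.
        if y k \<in> S \<ominus>\<^sub>P sneg V \<and> \<not> (sig (k - 1) = 1 \<and> y k \<notin> OmI \<ominus>\<^sub>P sneg V)
        then sig k = 0 \<and> u k = 0
        else sig k = 1 \<and> (sig (k - 1) = 0 \<longrightarrow> xK k = 0)) \<and>
     \<comment> \<open>control\<close>
     (\<forall>k\<ge>k0. sig k = 1 \<longrightarrow>
        xK (Suc k) = AK *v xK k + BK *v y k \<and> u k = CK *v xK k + DK *v y k)"

end

theory Submission
  imports Defs
begin

lemma sum_plus_univ:
  "(\<Sum>i\<in>(UNIV::('a::finite + 'b::finite) set). f i) = (\<Sum>i\<in>UNIV. f (Inl i)) + (\<Sum>i\<in>UNIV. f (Inr i))"
  using sum.Plus[of "UNIV::'a set" "UNIV::'b set" f] by (simp add: comp_def)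

lemma block_mult:
  "block P Q R S *v stack a b = stack (P *v a + Q *v b) (R *v a + S *v b)"
  by (simp add: vec_eq_iff block_def stack_def matrix_vector_mult_def sum_plus_univ split: sum.split)

lemma hblock_mult:
  "hblock P Q *v stack a b = P *v a + Q *v b"
  by (simp add: vec_eq_iff hblock_def stack_def matrix_vector_mult_def sum_plus_univ)

lemma top_stack[simp]: "top_part (stack a b) = a"
  by (simp add: vec_eq_iff top_part_def stack_def)

lemma stack_eq_iff: "stack a b = stack c d \<longleftrightarrow> a = c \<and> b = d"
  apply (auto simp: vec_eq_iff stack_def split: sum.split)
  done

lemma stack_add: "stack a b + stack c d = stack (a + c) (b + d)"
  by (simp add: vec_eq_iff stack_def split: sum.split)

lemma top_add: "top_part (a + b) = top_part a + top_part b"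
  by (simp add: vec_eq_iff top_part_def)

lemma top_sum: "top_part (sum f A) = (\<Sum>i\<in>A. top_part (f i))"
  by (simp add: vec_eq_iff top_part_def sum_component)

lemma top_axis:
  "top_part (M *v stack (c *\<^sub>R axis l 1) 0) $ p = c * M $ Inl p $ Inl l"
  by (simp add: top_part_def stack_def matrix_vector_mult_def sum_plus_univ axis_def if_distrib
      cong: if_cong)

lemma top_matvec:
  "top_part (M *v stack x 0) = (\<chi> p l. M $ Inl p $ Inl l) *v x"
  by (simp add: vec_eq_iff top_part_def stack_def matrix_vector_mult_def sum_plus_univ)

lemma cl_step:
  assumes "x' = A *v x + B *v u + w" "u = CK *v xK + DK *v (x + v)" "xK' = AK *v xK + BK *v (x + v)"
  shows "stack x' xK' = A_CL A B AK BK CK DK *v stack x xK + B_CL B BK DK *v stack w v"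
    and "u = C_CL CK DK *v stack x xK + D_CL DK *v stack w v"
proof -
  have "stack x' xK' = stack ((A + B ** DK) *v x + (B ** CK) *v xK + (mat 1 *v w + (B ** DK) *v v))
       (BK *v x + AK *v xK + (0 *v w + BK *v v))"
    using assms by (simp add: matrix_vector_mult_add_rdistrib matrix_vector_mul_assoc[symmetric]
        matrix_vector_right_distrib algebra_simps)
  also have "\<dots> = A_CL A B AK BK CK DK *v stack x xK + B_CL B BK DK *v stack w v"
    unfolding A_CL_def B_CL_def block_mult stack_add stack_eq_iff by (simp add: algebra_simps)
  finally show "stack x' xK' = A_CL A B AK BK CK DK *v stack x xK + B_CL B BK DK *v stack w v" .
  show "u = C_CL CK DK *v stack x xK + D_CL DK *v stack w v"
    using assms by (simp add: C_CL_def D_CL_def hblock_mult matrix_vector_right_distrib algebra_simps)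
qed

lemma cl_iter:
  assumes "\<And>i. i < j \<Longrightarrow> \<xi> (Suc (k+i)) = M *v \<xi> (k+i) + Bz (k+i)"
  shows "\<xi> (k+j) = matpow M j *v \<xi> k + (\<Sum>i<j. matpow M (j - Suc i) *v Bz (k+i))"
  using assms
proof (induction j)
  case 0
  then show ?case by (simp add: matrix_vector_mul_lid)
next
  case (Suc j)
  have IH: "\<xi> (k+j) = matpow M j *v \<xi> k + (\<Sum>i<j. matpow M (j - Suc i) *v Bz (k+i))"
    using Suc by simp
  have "\<xi> (k + Suc j) = M *v \<xi> (k+j) + Bz (k+j)" using Suc.prems[of j] by simp
  also have "\<dots> = matpow M (Suc j) *v \<xi> k + (\<Sum>i<j. matpow M (Suc j - Suc i) *v Bz (k+i)) + Bz (k+j)"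
  proof -
    have "(\<Sum>i<j. matpow M (Suc j - Suc i) *v Bz (k+i)) = (\<Sum>i<j. M *v (matpow M (j - Suc i) *v Bz (k+i)))"
    proof (rule sum.cong)
      fix i assume "i \<in> {..<j}"
      then have "Suc j - Suc i = Suc (j - Suc i)" by auto
      then show "matpow M (Suc j - Suc i) *v Bz (k+i) = M *v (matpow M (j - Suc i) *v Bz (k+i))"
        by (simp add: matrix_vector_mul_assoc)
    qed simp
    then show ?thesis using IH
      by (simp add: matrix_vector_right_distrib vec.sum matrix_vector_mul_assoc)
  qed
  also have "\<dots> = matpow M (Suc j) *v \<xi> k + (\<Sum>i<Suc j. matpow M (Suc j - Suc i) *v Bz (k+i))"
    by (simp add: matrix_vector_mul_lid)
  finally show ?case .
qed

lemma entries_to_zero: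
  fixes a :: "nat \<Rightarrow> real"
  assumes r: "r > 0" and bnd: "\<And>N. r * (\<Sum>i\<in>{0..N}. \<bar>a i\<bar>) \<le> K"
  shows "a \<longlonglongrightarrow> 0"
proof -
  have "summable (\<lambda>i. \<bar>a i\<bar>)"
  proof (rule summableI_nonneg_bounded[where x="K / r"])
    fix n
    have "(\<Sum>i<n. \<bar>a i\<bar>) \<le> (\<Sum>i\<in>{0..n}. \<bar>a i\<bar>)"
      by (rule sum_mono2) auto
    also have "\<dots> \<le> K / r" using bnd[of n] r by (simp add: field_simps mult.commute)
    finally show "(\<Sum>i<n. \<bar>a i\<bar>) \<le> K / r" .
  qed simp
  then have "(\<lambda>i. \<bar>a i\<bar>) \<longlonglongrightarrow> 0" by (rule summable_LIMSEQ_zero)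
  then show ?thesis by (simp add: tendsto_rabs_zero_iff)
qed

lemma matvec_small:
  fixes P :: "real^'n^'n"
  assumes "\<forall>p l. \<bar>P$p$l\<bar> \<le> e" "norm x \<le> R" "0 \<le> e"
  shows "norm (P *v x) \<le> real CARD('n) * (real CARD('n) * (e * R))"
proof -
  have R0: "0 \<le> R" using assms(2) norm_ge_zero order_trans by blast
  have comp: "\<bar>(P *v x)$p\<bar> \<le> real CARD('n) * (e * R)" for p
  proof -
    have "\<bar>(P *v x)$p\<bar> = \<bar>\<Sum>l\<in>UNIV. P$p$l * x$l\<bar>" by (simp add: matrix_vector_mult_def)
    also have "\<dots> \<le> (\<Sum>l\<in>UNIV. \<bar>P$p$l * x$l\<bar>)" by (rule sum_abs)
    also have "\<dots> \<le> (\<Sum>l\<in>(UNIV::'n set). e * R)"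
    proof (rule sum_mono)
      fix l
      have "\<bar>x$l\<bar> \<le> R" using component_le_norm_cart[of x l] assms(2) by linarith
      then show "\<bar>P$p$l * x$l\<bar> \<le> e * R" unfolding abs_mult
        using assms(1,3) by (simp add: mult_mono)
    qed
    finally show ?thesis by simp
  qed
  have "norm (P *v x) \<le> (\<Sum>p\<in>UNIV. \<bar>(P *v x)$p\<bar>)" by (rule norm_le_l1_cart)
  also have "\<dots> \<le> (\<Sum>p\<in>(UNIV::'n set). real CARD('n) * (e * R))" by (rule sum_mono) (rule comp)
  finally show ?thesis by simp
qed

lemma pdiff_convex:
  assumes "convex C" shows "convex (C \<ominus>\<^sub>P N)"
  unfolding convex_def pdiff_def
proof (intro ballI allI impI, simp, intro ballI)
  fix x y b and u v :: real
  assume x: "\<forall>b\<in>N. x + b \<in> C" and y: "\<forall>b\<in>N. y + b \<in> C" and uv: "0 \<le> u" "0 \<le> v" "u + v = 1" and b: "b \<in> N"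
  have "u *\<^sub>R (x + b) + v *\<^sub>R (y + b) \<in> C" using assms x y b uv by (simp add: convexD)
  moreover have "u *\<^sub>R (x + b) + v *\<^sub>R (y + b) = u *\<^sub>R x + v *\<^sub>R y + b"
    using uv by (simp add: algebra_simps flip: scaleR_add_left)
  ultimately show "u *\<^sub>R x + v *\<^sub>R y + b \<in> C" by simp
qed

lemma msum_eq: "A \<oplus>\<^sub>M B = (\<lambda>(x,y). x + y) ` (A \<times> B)"
  by (auto simp: msum_def)

lemma msumI: "a \<in> A \<Longrightarrow> b \<in> B \<Longrightarrow> a + b \<in> A \<oplus>\<^sub>M B"
  by (auto simp: msum_def)


lemma pdiff_mem: "y \<in> S \<ominus>\<^sub>P sneg V \<Longrightarrow> v \<in> V \<Longrightarrow> y = x + v \<Longrightarrow> x \<in> S"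
  unfolding pdiff_def sneg_def by force

lemma om_exit: "x \<in> OmI \<ominus>\<^sub>P (sneg V \<oplus>\<^sub>M V) \<Longrightarrow> v \<in> V \<Longrightarrow> x + v \<in> OmI \<ominus>\<^sub>P sneg V"
proof -
  assume x: "x \<in> OmI \<ominus>\<^sub>P (sneg V \<oplus>\<^sub>M V)" and v: "v \<in> V"
  show "x + v \<in> OmI \<ominus>\<^sub>P sneg V"
    unfolding pdiff_def
  proof (intro CollectI ballI)
    fix b assume "b \<in> sneg V"
    then have "b + v \<in> sneg V \<oplus>\<^sub>M V" using v by (rule msumI)
    then have "x + (b + v) \<in> OmI" using x unfolding pdiff_def by blast
    then show "x + v + b \<in> OmI" by (simp add: algebra_simps)
  qed
qed

lemma pdiff_mono: "A \<subseteq> C \<Longrightarrow> A \<ominus>\<^sub>P N \<subseteq> C \<ominus>\<^sub>P N"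
  unfolding pdiff_def by blast

theorem theorem1:
  fixes A :: "real^'n^'n" and B :: "real^'m^'n"
    and AK :: "real^'k^'k" and BK :: "real^'n^'k" and CK :: "real^'k^'m" and DK :: "real^'n^'m"
    and D W V S X :: "(real^'n) set" and U :: "(real^'m) set"
    and OmI :: "(real^'n) set" and OmO :: "(real^('n + 'k)) set"
    and eps_s :: real
  assumes polyD: "polytope D" and D0: "0 \<in> interior D"
    and polyW: "polytope W" and W0: "0 \<in> interior W"
    and polyV: "polytope V" and V0: "0 \<in> interior V"
    and polyU: "polytope U" and U0: "0 \<in> interior U"
    and polyS: "polytope S" and S0: "0 \<in> interior S"
    and polyX: "polytope X" and X0: "0 \<in> interior X"
    and SX: "S \<subseteq> X"
    and eps_p: "\<exists>e. 0 < e \<and> e < 1 \<and> V \<subseteq> sscale e S"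
    and eps_m: "\<exists>e. 0 < e \<and> e < 1 \<and> sneg V \<subseteq> sscale e S"
    and delta: "\<exists>\<delta>>0. cball 0 \<delta> \<subseteq> S"
    and Splus: "((\<lambda>s. A *v s) ` S) \<oplus>\<^sub>M W \<oplus>\<^sub>M D \<subseteq> X"
    and schur: "schur (A_CL A B AK BK CK DK)"
    and polyI: "polyhedron OmI" and OmI0: "0 \<in> OmI"
    and polyO: "polyhedron OmO" and OmO0: "0 \<in> OmO"
    and eps_s: "0 < eps_s" "eps_s < 1"
    and I1: "OmI \<subseteq> sscale eps_s S"
    and I2: "\<exists>\<alpha>>0. cball 0 \<alpha> \<subseteq> OmI \<ominus>\<^sub>P (sneg V \<oplus>\<^sub>M V)"
    and I3: "\<exists>\<beta>. 0 < \<beta> \<and> \<beta> < 1 \<and> (\<forall>N.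
               big_msum N (\<lambda>i. (\<lambda>z. top_part (matpow (A_CL A B AK BK CK DK) i *v (B_CL B BK DK *v z)))
                                 ` Zset W V)
               \<subseteq> sscale \<beta> (OmI \<ominus>\<^sub>P (sneg V \<oplus>\<^sub>M V)))"
    and O1: "(\<lambda>s. stack s 0) ` (convex hull (S \<union> (((\<lambda>s. A *v s) ` S) \<oplus>\<^sub>M W \<oplus>\<^sub>M D))) \<subseteq> OmO"
    and O2: "((\<lambda>\<xi>. A_CL A B AK BK CK DK *v \<xi>) ` OmO) \<oplus>\<^sub>M ((\<lambda>z. B_CL B BK DK *v z) ` Zset W V) \<subseteq> OmO"
    and O3: "top_part ` OmO \<subseteq> X"
    and O4: "((\<lambda>\<xi>. C_CL CK DK *v \<xi>) ` OmO) \<oplus>\<^sub>M ((\<lambda>z. D_CL DK *v z) ` Zset W V) \<subseteq> U"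
  shows "\<exists>Tmax::nat. Tmax > 0 \<and>
    (\<forall>k0 x u xK sig d w v y.
       x k0 \<in> convex hull (S \<union> (((\<lambda>s. A *v s) ` S) \<oplus>\<^sub>M W \<oplus>\<^sub>M D)) \<and>
       alg_run A B AK BK CK DK D W V S OmI k0 x u xK sig d w v y \<longrightarrow>
         (\<forall>k\<ge>k0. x k \<in> X \<and> u k \<in> U) \<and>
         (sig k0 = 1 \<longrightarrow> (\<exists>T0\<in>{1..Tmax}. sig (k0 + T0) = 0)) \<and>
         (\<forall>k>k0. sig k = 1 \<and> sig (k - 1) = 0 \<longrightarrow> (\<exists>T\<in>{1..Tmax}. sig (k + T) = 0)) \<and>
         (\<forall>k\<ge>k0. sig k = 0 \<longrightarrow> x k \<in> S))"
proof -
  define M where "M = A_CL A B AK BK CK DK"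
  define Bc where "Bc = B_CL B BK DK"
  define Sc where "Sc = convex hull (S \<union> (((\<lambda>s. A *v s) ` S) \<oplus>\<^sub>M W \<oplus>\<^sub>M D))"
  define Om where "Om = OmI \<ominus>\<^sub>P (sneg V \<oplus>\<^sub>M V)"
  define F where "F = (\<lambda>i. (\<lambda>z. top_part (matpow M i *v (Bc *v z))) ` Zset W V)"
  have V0': "0 \<in> V" using V0 interior_subset by blast
  have W0': "0 \<in> W" using W0 interior_subset by blast
  have U0': "0 \<in> U" using U0 interior_subset by blast
  have S0': "0 \<in> S" using S0 interior_subset by blast
  have convS: "convex S" using polyS polytope_imp_convex by blast
  have OmIS: "OmI \<subseteq> S"
  proof
    fix q assume "q \<in> OmI"
    then obtain s where s: "s \<in> S" "q = eps_s *\<^sub>R s" using I1 by (auto simp: sscale_def)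
    have "eps_s *\<^sub>R s + (1 - eps_s) *\<^sub>R 0 \<in> S"
      using convexD[OF convS s(1) S0', of eps_s "1 - eps_s"] eps_s by simp
    then show "q \<in> S" using s by simp
  qed
  have N0: "0 \<in> sneg V \<oplus>\<^sub>M V" using V0' by (force simp: msum_def sneg_def)
  have OmOmI: "Om \<subseteq> OmI" unfolding Om_def pdiff_def using N0 by fastforce
  have bS: "bounded S" using polytope_imp_compact[OF polyS] compact_imp_bounded by blast
  obtain K0 where K0: "\<forall>s\<in>S. norm s \<le> K0" using bS bounded_iff by metis
  obtain \<beta> where \<beta>: "0 < \<beta>" "\<beta> < 1" "\<And>N. big_msum N F \<subseteq> sscale \<beta> Om"
    using I3 unfolding F_def Om_def M_def Bc_def by blast
  obtain \<alpha> where \<alpha>: "\<alpha> > 0" "cball 0 \<alpha> \<subseteq> Om" using I2 Om_def by blast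
  have convOm: "convex Om" unfolding Om_def by (rule pdiff_convex[OF polyhedron_imp_convex[OF polyI]])
  obtain r where r: "r > 0" "cball 0 r \<subseteq> W" using W0 mem_interior_cball by blast
  have bnd\<beta>: "norm q \<le> K0" if qq: "q \<in> sscale \<beta> Om" for q
  proof -
    obtain zz where zz: "zz \<in> Om" "q = \<beta> *\<^sub>R zz" using qq by (auto simp: sscale_def)
    have "norm zz \<le> K0" using zz(1) OmOmI OmIS K0 by blast
    moreover have "norm q = \<beta> * norm zz" using zz \<beta> by simp
    moreover have "\<beta> * norm zz \<le> norm zz" using \<beta> by (simp add: mult_left_le_one_le)
    ultimately show ?thesis by linarith
  qed
  have Bcst: "\<And>u. Bc *v stack u 0 = stack u 0"
    unfolding Bc_def B_CL_def block_mult by (simp add: matrix_vector_mul_lid)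
  have ent: "(\<lambda>i. matpow M i $ Inl p $ Inl l) \<longlonglongrightarrow> 0" for p l :: 'n
  proof (rule entries_to_zero[OF r(1), where K=K0])
    fix N
    define a where "a = (\<lambda>i. matpow M i $ Inl p $ Inl l)"
    define g where "g = (\<lambda>i. top_part (matpow M i *v (Bc *v stack ((r * sgn (a i)) *\<^sub>R axis l 1) 0)))"
    have gF: "\<forall>i\<in>{0..N}. g i \<in> F i"
    proof
      fix i
      have "norm ((r * sgn (a i)) *\<^sub>R axis l (1::real)) \<le> r" using r by (simp add: sgn_if norm_axis_1)
      then have wW: "(r * sgn (a i)) *\<^sub>R axis l (1::real) \<in> W" using r(2) by auto
      have "stack ((r * sgn (a i)) *\<^sub>R axis l 1) 0 \<in> Zset W V"
        unfolding Zset_def using wW V0' by blast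
      then show "g i \<in> F i" unfolding g_def F_def by blast
    qed
    have "(\<Sum>i\<in>{0..N}. g i) \<in> big_msum N F" unfolding big_msum_def using gF by blast
    then have "norm (\<Sum>i\<in>{0..N}. g i) \<le> K0" using \<beta>(3) bnd\<beta> by blast
    then have le: "\<bar>(\<Sum>i\<in>{0..N}. g i) $ p\<bar> \<le> K0" using component_le_norm_cart order_trans by blast
    have "(\<Sum>i\<in>{0..N}. g i) $ p = (\<Sum>i\<in>{0..N}. r * \<bar>a i\<bar>)"
      unfolding sum_component g_def Bcst top_axis
    proof (rule sum.cong)
      fix i show "r * sgn (a i) * matpow M i $ Inl p $ Inl l = r * \<bar>a i\<bar>"
        by (auto simp: sgn_if a_def)
    qed simp
    then show "r * (\<Sum>i\<in>{0..N}. \<bar>matpow M i $ Inl p $ Inl l\<bar>) \<le> K0"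
      using le by (simp add: a_def sum_distrib_left)
  qed
  have bSc: "bounded Sc"
  proof -
    have b1: "bounded ((\<lambda>s. A *v s) ` S)"
      by (rule bounded_linear_image[OF bS matrix_vector_mul_bounded_linear])
    have bW: "bounded W" using polytope_imp_compact[OF polyW] compact_imp_bounded by blast
    have bD: "bounded D" using polytope_imp_compact[OF polyD] compact_imp_bounded by blast
    have b2: "bounded (((\<lambda>s. A *v s) ` S) \<oplus>\<^sub>M W \<oplus>\<^sub>M D)"
      unfolding msum_eq by (rule bounded_plus[OF bounded_plus[OF b1 bW] bD])
    have "bounded (S \<union> (((\<lambda>s. A *v s) ` S) \<oplus>\<^sub>M W \<oplus>\<^sub>M D))"
      using bS b2 by (simp only: bounded_Un)
    then show ?thesis unfolding Sc_def by (rule bounded_convex_hull)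
  qed
  obtain R where R: "\<forall>q\<in>Sc. norm q \<le> R" using bSc[unfolded bounded_iff] by (elim exE)
  have "0 \<in> Sc" unfolding Sc_def by (rule hull_inc) (simp add: S0')
  then have "norm (0::real^'n) \<le> R" using R by blast
  then have R0: "0 \<le> R" by simp
  define c where "c = real CARD('n)"
  define \<epsilon> where "\<epsilon> = (1 - \<beta>) * \<alpha> / (c * c * (R + 1))"
  have c0: "c > 0" by (simp add: c_def)
  have \<epsilon>pos: "\<epsilon> > 0" unfolding \<epsilon>_def using c0 R0 \<alpha> \<beta> by simp
  have "\<forall>\<^sub>F i in sequentially. \<forall>pl::'n\<times>'n. \<bar>matpow M i $ Inl (fst pl) $ Inl (snd pl)\<bar> < \<epsilon>"
  proof (rule eventually_all_finite)
    fix pl :: "'n \<times> 'n"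
    show "\<forall>\<^sub>F i in sequentially. \<bar>matpow M i $ Inl (fst pl) $ Inl (snd pl)\<bar> < \<epsilon>"
      using tendstoD[OF ent[of "fst pl" "snd pl"] \<epsilon>pos] by simp
  qed
  then obtain N0 where N0: "\<And>i pl. i \<ge> N0 \<Longrightarrow> \<bar>matpow M i $ Inl (fst pl) $ Inl (snd pl)\<bar> < \<epsilon>"
    by (auto simp: eventually_sequentially)
  define J where "J = Suc N0"
  have J1: "J > 0" by (simp add: J_def)
  have Jsmall: "top_part (matpow M J *v stack q 0) \<in> sscale (1-\<beta>) Om" if q: "q \<in> Sc" for q
  proof -
    let ?P = "(\<chi> p l. matpow M J $ Inl p $ Inl l)"
    have "\<forall>p l. \<bar>?P $ p $ l\<bar> \<le> \<epsilon>"
    proof (intro allI)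
      fix p l :: 'n
      show "\<bar>?P $ p $ l\<bar> \<le> \<epsilon>" using N0[of J "(p, l)"] by (simp add: J_def)
    qed
    then have "norm (?P *v q) \<le> c * (c * (\<epsilon> * R))"
      using matvec_small[of ?P \<epsilon> q R] R q \<epsilon>pos unfolding c_def by simp
    also have "\<dots> \<le> (1 - \<beta>) * \<alpha>"
    proof -
      have nz: "c * c * (R + 1) \<noteq> 0" using c0 R0 by simp
      have e1: "\<epsilon> * (c * c * (R + 1)) = (1 - \<beta>) * \<alpha>" unfolding \<epsilon>_def using nz by simp
      have "0 \<le> \<epsilon> * (c * c)" using \<epsilon>pos c0 by simp
      then have "c * (c * (\<epsilon> * R)) \<le> \<epsilon> * (c * c * (R + 1))" by (simp add: algebra_simps)
      then show ?thesis using e1 by simp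
    qed
    finally have nq: "norm (top_part (matpow M J *v stack q 0)) \<le> (1 - \<beta>) * \<alpha>"
      by (simp add: top_matvec)
    define t where "t = top_part (matpow M J *v stack q 0)"
    define zz where "zz = (1 / (1 - \<beta>)) *\<^sub>R t"
    have "norm zz = norm t / (1 - \<beta>)" unfolding zz_def using \<beta> by simp
    also have "\<dots> \<le> \<alpha>" using nq \<beta> unfolding t_def by (simp add: divide_le_eq mult.commute)
    finally have "zz \<in> Om" using \<alpha>(2) by auto
    moreover have "t = (1 - \<beta>) *\<^sub>R zz" unfolding zz_def using \<beta> by simp
    ultimately show ?thesis unfolding sscale_def t_def by blast
  qed
  have combine: "a + b \<in> Om" if ab: "a \<in> sscale (1-\<beta>) Om" "b \<in> sscale \<beta> Om" for a b
  proof -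
    obtain o1 where o1: "o1 \<in> Om" "a = (1-\<beta>) *\<^sub>R o1" using ab(1) by (auto simp: sscale_def)
    obtain o2 where o2: "o2 \<in> Om" "b = \<beta> *\<^sub>R o2" using ab(2) by (auto simp: sscale_def)
    show ?thesis using convexD[OF convOm o1(1) o2(1), of "1-\<beta>" \<beta>] \<beta> o1 o2 by simp
  qed
  have O1': "\<And>s. s \<in> Sc \<Longrightarrow> stack s 0 \<in> OmO"
    using O1 unfolding Sc_def image_subset_iff by blast
  have O2': "\<And>\<xi> z. \<xi> \<in> OmO \<Longrightarrow> z \<in> Zset W V \<Longrightarrow> M *v \<xi> + Bc *v z \<in> OmO"
  proof -
    fix \<xi> z assume "\<xi> \<in> OmO" "z \<in> Zset W V"
    then have "M *v \<xi> + Bc *v z \<in> ((\<lambda>\<xi>. M *v \<xi>) ` OmO) \<oplus>\<^sub>M ((\<lambda>z. Bc *v z) ` Zset W V)"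
      by (intro msumI imageI)
    then show "M *v \<xi> + Bc *v z \<in> OmO" using O2 unfolding M_def Bc_def by (rule subsetD[rotated])
  qed
  have O4': "\<And>\<xi> z. \<xi> \<in> OmO \<Longrightarrow> z \<in> Zset W V \<Longrightarrow> C_CL CK DK *v \<xi> + D_CL DK *v z \<in> U"
  proof -
    fix \<xi> z assume "\<xi> \<in> OmO" "z \<in> Zset W V"
    then have "C_CL CK DK *v \<xi> + D_CL DK *v z \<in> ((\<lambda>\<xi>. C_CL CK DK *v \<xi>) ` OmO) \<oplus>\<^sub>M ((\<lambda>z. D_CL DK *v z) ` Zset W V)"
      by (intro msumI imageI)
    then show "C_CL CK DK *v \<xi> + D_CL DK *v z \<in> U" using O4 by (rule subsetD[rotated])
  qed
  have main: "(\<forall>k\<ge>k0. x k \<in> X \<and> u k \<in> U) \<and>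
         (sig k0 = 1 \<longrightarrow> (\<exists>T0\<in>{1..J}. sig (k0 + T0) = 0)) \<and>
         (\<forall>k>k0. sig k = 1 \<and> sig (k - 1) = 0 \<longrightarrow> (\<exists>T\<in>{1..J}. sig (k + T) = 0)) \<and>
         (\<forall>k\<ge>k0. sig k = 0 \<longrightarrow> x k \<in> S)"
    if x0: "x k0 \<in> Sc" and run: "alg_run A B AK BK CK DK D W V S OmI k0 x u xK sig d w v y"
    for k0 x u xK sig d w v y
  proof -
    have init: "if y k0 \<in> S \<ominus>\<^sub>P sneg V then sig k0 = 0 \<and> u k0 = 0 else sig k0 = 1 \<and> xK k0 = 0"
      using run unfolding alg_run_def by blast
    have mon: "\<And>k. k > k0 \<Longrightarrow> (if y k \<in> S \<ominus>\<^sub>P sneg V \<and> \<not> (sig (k - 1) = 1 \<and> y k \<notin> OmI \<ominus>\<^sub>P sneg V)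
        then sig k = 0 \<and> u k = 0
        else sig k = 1 \<and> (sig (k - 1) = 0 \<longrightarrow> xK k = 0))"
      using run unfolding alg_run_def by blast
    have ctl: "\<And>k. k \<ge> k0 \<Longrightarrow> sig k = 1 \<Longrightarrow>
        xK (Suc k) = AK *v xK k + BK *v y k \<and> u k = CK *v xK k + DK *v y k"
      using run unfolding alg_run_def by blast
    have pl: "\<And>k. k \<ge> k0 \<Longrightarrow> d k \<in> D \<and> w k \<in> W \<and> v k \<in> V \<and> y k = x k + v k \<and>
        x (Suc k) = A *v x k + sig k *\<^sub>R (B *v u k) + (1 - sig k) *\<^sub>R d k + w k"
      using run unfolding alg_run_def by blast
    have sig01: "sig k = 0 \<or> sig k = 1" if "k \<ge> k0" for k
      using init mon[of k] that by (cases "k = k0") (auto split: if_splits)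
    have zero: "x k \<in> S \<and> u k = 0" if "k \<ge> k0" "sig k = 0" for k
    proof -
      have "y k \<in> S \<ominus>\<^sub>P sneg V \<and> u k = 0"
        using init mon[of k] that by (cases "k = k0") (auto split: if_splits)
      then show ?thesis using pdiff_mem[of "y k" S V "v k" "x k"] pl[OF that(1)] by auto
    qed
    have step: "stack (x (Suc k)) (xK (Suc k)) = M *v stack (x k) (xK k) + Bc *v stack (w k) (v k) \<and>
        u k = C_CL CK DK *v stack (x k) (xK k) + D_CL DK *v stack (w k) (v k)"
      if "k \<ge> k0" "sig k = 1" for k
    proof -
      have e1: "x (Suc k) = A *v x k + B *v u k + w k" using pl[OF that(1)] that(2) by simp
      have e2: "u k = CK *v xK k + DK *v (x k + v k)" using ctl[OF that] pl[OF that(1)] by simp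
      have e3: "xK (Suc k) = AK *v xK k + BK *v (x k + v k)" using ctl[OF that] pl[OF that(1)] by simp
      show ?thesis using cl_step[OF e1 e2 e3] unfolding M_def Bc_def by simp
    qed
    have entry: "x k \<in> Sc \<and> xK k = 0" if "k \<ge> k0" "sig k = 1" "k = k0 \<or> sig (k - 1) = 0" for k
    proof (cases "k = k0")
      case True
      then show ?thesis using x0 init that(2) by (auto split: if_splits)
    next
      case False
      then have kk: "k > k0" "sig (k - 1) = 0" using that by auto
      then have km: "k - 1 \<ge> k0" by simp
      have Sk: "Suc (k - 1) = k" using kk by simp
      have xs: "x (k - 1) \<in> S" using zero[OF km kk(2)] by simp
      have "x k = A *v x (k - 1) + w (k - 1) + d (k - 1)"
        using pl[OF km] kk(2) Sk by (simp add: algebra_simps)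
      moreover have "A *v x (k - 1) + w (k - 1) + d (k - 1) \<in> ((\<lambda>s. A *v s) ` S) \<oplus>\<^sub>M W \<oplus>\<^sub>M D"
        using xs pl[OF km] by (intro msumI) auto
      ultimately have "x k \<in> Sc" unfolding Sc_def by (simp add: hull_inc)
      moreover have "xK k = 0" using mon[OF kk(1)] that(2) kk(2) by (auto split: if_splits)
      ultimately show ?thesis by simp
    qed
    have inv: "stack (x (k0 + j)) (xK (k0 + j)) \<in> OmO" if "sig (k0 + j) = 1" for j
      using that
    proof (induction j)
      case 0
      then have "x k0 \<in> Sc \<and> xK k0 = 0" using entry[of k0] by simp
      then show ?case using O1' by simp
    next
      case (Suc j)
      show ?case
      proof (cases "sig (k0 + j) = 0")
        case True
        then have "x (k0 + Suc j) \<in> Sc \<and> xK (k0 + Suc j) = 0"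
          using entry[of "k0 + Suc j"] Suc.prems by simp
        then show ?thesis using O1' by simp
      next
        case False
        then have s1: "sig (k0 + j) = 1" using sig01[of "k0 + j"] by simp
        have "stack (x (k0 + Suc j)) (xK (k0 + Suc j)) =
            M *v stack (x (k0+j)) (xK (k0+j)) + Bc *v stack (w (k0+j)) (v (k0+j))"
          using step[of "k0 + j"] s1 by simp
        moreover have "stack (w (k0+j)) (v (k0+j)) \<in> Zset W V"
          using pl[of "k0 + j"] unfolding Zset_def by auto
        ultimately show ?thesis using O2'[OF Suc.IH[OF s1]] by simp
      qed
    qed
    have inv': "stack (x k) (xK k) \<in> OmO" if "k \<ge> k0" "sig k = 1" for k
      using inv[of "k - k0"] that by simp
    have exitT: "\<exists>T\<in>{1..J}. sig (k + T) = 0"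
      if k: "k \<ge> k0" "sig k = 1" "k = k0 \<or> sig (k - 1) = 0" for k
    proof (rule ccontr)
      assume nex: "\<not> (\<exists>T\<in>{1..J}. sig (k + T) = 0)"
      have all1: "sig (k + i) = 1" if "i \<le> J" for i
      proof (cases "i = 0")
        case True then show ?thesis using k by simp
      next
        case False then show ?thesis using nex sig01[of "k + i"] that k by auto
      qed
      define \<xi> where "\<xi> = (\<lambda>t. stack (x t) (xK t))"
      define Bz where "Bz = (\<lambda>t. Bc *v stack (w t) (v t))"
      have it: "\<xi> (k+J) = matpow M J *v \<xi> k + (\<Sum>i<J. matpow M (J - Suc i) *v Bz (k+i))"
      proof (rule cl_iter)
        fix i assume "i < J"
        then show "\<xi> (Suc (k + i)) = M *v \<xi> (k + i) + Bz (k + i)"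
          using step[of "k + i"] all1[of i] k unfolding \<xi>_def Bz_def by simp
      qed
      have xk: "\<xi> k = stack (x k) 0" using entry[OF k] unfolding \<xi>_def by simp
      have xkS: "x k \<in> Sc" using entry[OF k] by simp
      define g where "g = (\<lambda>i. top_part (matpow M i *v Bz (k + (J - Suc i))))"
      have reidx: "(\<Sum>i<J. top_part (matpow M (J - Suc i) *v Bz (k+i))) = (\<Sum>i<J. g i)"
      proof -
        have "(\<Sum>i<J. top_part (matpow M (J - Suc i) *v Bz (k+i))) = (\<Sum>i<J. g (J - Suc i))"
        proof (rule sum.cong)
          fix i assume "i \<in> {..<J}"
          then have "J - Suc (J - Suc i) = i" by auto
          then show "top_part (matpow M (J - Suc i) *v Bz (k+i)) = g (J - Suc i)"
            unfolding g_def by simp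
        qed simp
        also have "\<dots> = (\<Sum>i<J. g i)" by (rule sum.nat_diff_reindex)
        finally show ?thesis .
      qed
      have xJ: "x (k + J) = top_part (matpow M J *v stack (x k) 0) + (\<Sum>i<J. g i)"
      proof -
        have "x (k + J) = top_part (\<xi> (k + J))" unfolding \<xi>_def by simp
        also have "\<dots> = top_part (matpow M J *v stack (x k) 0) + (\<Sum>i<J. top_part (matpow M (J - Suc i) *v Bz (k+i)))"
          unfolding it xk top_add top_sum ..
        finally show ?thesis unfolding reidx .
      qed
      have gF: "\<forall>i\<in>{0..N0}. g i \<in> F i"
      proof
        fix i
        have "stack (w (k + (J - Suc i))) (v (k + (J - Suc i))) \<in> Zset W V"
          using pl[of "k + (J - Suc i)"] k unfolding Zset_def by auto
        then show "g i \<in> F i" unfolding g_def F_def Bz_def by blast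
      qed
      have "(\<Sum>i<J. g i) = (\<Sum>i\<in>{0..N0}. g i)" unfolding J_def
        by (simp add: lessThan_Suc_atMost atLeast0AtMost)
      then have "(\<Sum>i<J. g i) \<in> big_msum N0 F" unfolding big_msum_def using gF by auto
      then have "(\<Sum>i<J. g i) \<in> sscale \<beta> Om" using \<beta>(3) by blast
      then have "x (k + J) \<in> Om" unfolding xJ using combine Jsmall[OF xkS] by blast
      then have yO: "y (k + J) \<in> OmI \<ominus>\<^sub>P sneg V"
        using om_exit[of "x (k + J)" OmI V "v (k + J)"] pl[of "k + J"] k unfolding Om_def by auto
      then have yS: "y (k + J) \<in> S \<ominus>\<^sub>P sneg V" using pdiff_mono[OF OmIS] by blast
      have "sig (k + J - 1) = 1" using all1[of N0] unfolding J_def by simp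
      then have "sig (k + J) = 0" using mon[of "k + J"] yO yS J1 k(1) by (auto split: if_splits)
      moreover have "sig (k + J) = 1" using all1[of J] by simp
      ultimately show False by simp
    qed
    have pa: "\<forall>k\<ge>k0. x k \<in> X \<and> u k \<in> U"
    proof (intro allI impI)
      fix k assume kk: "k \<ge> k0"
      show "x k \<in> X \<and> u k \<in> U"
      proof (cases "sig k = 0")
        case True
        then show ?thesis using zero[OF kk] SX U0' by auto
      next
        case False
        then have s1: "sig k = 1" using sig01[OF kk] by simp
        have om: "stack (x k) (xK k) \<in> OmO" using inv'[OF kk s1] .
        have "x k = top_part (stack (x k) (xK k))" by simp
        then have "x k \<in> X" using imageI[OF om, of top_part] O3 by (simp add: subset_iff)
        moreover have "stack (w k) (v k) \<in> Zset W V" using pl[OF kk] unfolding Zset_def by auto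
        then have "u k \<in> U" using step[OF kk s1] O4'[OF om] by simp
        ultimately show ?thesis by simp
      qed
    qed
    show ?thesis
    proof (intro conjI)
      show "\<forall>k\<ge>k0. x k \<in> X \<and> u k \<in> U" by (rule pa)
      show "sig k0 = 1 \<longrightarrow> (\<exists>T0\<in>{1..J}. sig (k0 + T0) = 0)" using exitT[of k0] by simp
      show "\<forall>k>k0. sig k = 1 \<and> sig (k - 1) = 0 \<longrightarrow> (\<exists>T\<in>{1..J}. sig (k + T) = 0)"
        using exitT by auto
      show "\<forall>k\<ge>k0. sig k = 0 \<longrightarrow> x k \<in> S" using zero by blast
    qed
  qed
  show ?thesis
    apply (rule exI[of _ J])
    using J1 main unfolding Sc_def by blast
qed

end
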